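(* Let $\mathcal{A}$ be the greedy algorithm. Then for every $\ell\in[n]$, $$\mathbb{E}[v(\mathcal{A}(U^{\le\ell}))]\ \ge\ \alpha_\ell\,\frac{\ell}{n}\,v(\mathrm{OPT}),\qquad \alpha_\ell=1-\frac{\ell}{en}-\frac{1}{ek}.$$
   Context: Let $U$ be a finite ground set of $n$ items and $k\ge1$ an integer. Let $v\colon 2^U\to\mathbb{R}_{\ge0}$ be monotone and submodular, and $\mathrm{OPT}\in\arg\max\{v(S): S\subseteq U, |S|\le k\}$. The items arrive one per round in a uniformly random order; $U^{\le \ell}$ denotes the set of items arriving in rounds $1,\dots,\ell$. The greedy algorithm, given $L\subseteq U$, starts from $\emptyset$ and repeatedly adds an item of $L$ with maximum marginal increase $v(S\cup\{x\})-v(S)$ (ties broken by a fixed rule depending only on the items) until $\min(k,|L|)$ items are chosen; $\mathcal{A}(L)$ denotes its output. *)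

theory Defs
  imports "HOL-Probability.Probability" "HOL-Combinatorics.Multiset_Permutations"
begin

definition monotone_setfun :: "'a set \<Rightarrow> ('a set \<Rightarrow> real) \<Rightarrow> bool" where
  "monotone_setfun U v \<longleftrightarrow> (\<forall>A B. A \<subseteq> B \<and> B \<subseteq> U \<longrightarrow> v A \<le> v B)"

definition submodular_setfun :: "'a set \<Rightarrow> ('a set \<Rightarrow> real) \<Rightarrow> bool" where
  "submodular_setfun U v \<longleftrightarrow>
     (\<forall>A B x. A \<subseteq> B \<and> B \<subseteq> U \<and> x \<in> U - B \<longrightarrow>
        v (insert x B) - v B \<le> v (insert x A) - v A)"

definition nonneg_setfun :: "'a set \<Rightarrow> ('a set \<Rightarrow> real) \<Rightarrow> bool" where
  "nonneg_setfun U v \<longleftrightarrow> (\<forall>S. S \<subseteq> U \<longrightarrow> 0 \<le> v S)"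

definition greedy_cands :: "('a set \<Rightarrow> real) \<Rightarrow> 'a set \<Rightarrow> 'a set \<Rightarrow> 'a set" where
  "greedy_cands v L S =
     {x \<in> L - S. \<forall>y \<in> L - S. v (insert y S) - v S \<le> v (insert x S) - v S}"

definition greedy_step :: "('a set \<Rightarrow> real) \<Rightarrow> ('a set \<Rightarrow> 'a) \<Rightarrow> 'a set \<Rightarrow> 'a set \<Rightarrow> 'a set" where
  "greedy_step v tb L S = insert (tb (greedy_cands v L S)) S"

definition greedy :: "('a set \<Rightarrow> real) \<Rightarrow> ('a set \<Rightarrow> 'a) \<Rightarrow> nat \<Rightarrow> 'a set \<Rightarrow> 'a set" where
  "greedy v tb k L = (greedy_step v tb L ^^ min k (card L)) {}"

end

theory Submission
  imports Defs
begin

lemma submodD: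
  "submodular_setfun U v \<Longrightarrow> A \<subseteq> B \<Longrightarrow> B \<subseteq> U \<Longrightarrow> x \<in> U \<Longrightarrow> x \<notin> B \<Longrightarrow>
     v (insert x B) - v B \<le> v (insert x A) - v A"
  unfolding submodular_setfun_def by blast

lemma monoD:
  "monotone_setfun U v \<Longrightarrow> A \<subseteq> B \<Longrightarrow> B \<subseteq> U \<Longrightarrow> v A \<le> v B"
  unfolding monotone_setfun_def by blast

lemma nonnegD:
  "nonneg_setfun U v \<Longrightarrow> S \<subseteq> U \<Longrightarrow> 0 \<le> v S"
  unfolding nonneg_setfun_def by blast

lemma sub_sum:
  assumes submod: "submodular_setfun U v" and fin: "finite W"
    and "S \<subseteq> U" "W \<subseteq> U" "S \<inter> W = {}"
  shows "v (S \<union> W) \<le> v S + (\<Sum>t\<in>W. v (insert t S) - v S)"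
  using fin assms(3-5)
proof (induction W rule: finite_induct)
  case empty then show ?case by simp
next
  case (insert t W)
  have tU: "t \<in> U" and tn: "t \<notin> S \<union> W" and SWU: "S \<union> W \<subseteq> U"
    using insert by auto
  have "v (insert t (S \<union> W)) - v (S \<union> W) \<le> v (insert t S) - v S"
    by (rule submodD[OF submod _ SWU tU tn]) simp
  moreover have "v (S \<union> W) \<le> v S + (\<Sum>t\<in>W. v (insert t S) - v S)"
    using insert by auto
  ultimately show ?case using insert.hyps by simp
qed


lemma weights:
  assumes mono: "monotone_setfun U v" and submod: "submodular_setfun U v"
    and fin: "finite X" and XU: "X \<subseteq> U"
  shows "\<exists>\<Delta>. (\<forall>x\<in>X. 0 \<le> \<Delta> x) \<and> v X = v {} + (\<Sum>x\<in>X. \<Delta> x)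
            \<and> (\<forall>Y. Y \<subseteq> X \<longrightarrow> v {} + (\<Sum>x\<in>Y. \<Delta> x) \<le> v Y)"
  using fin XU
proof (induction X rule: finite_induct)
  case empty then show ?case by auto
next
  case (insert a X)
  then obtain \<Delta> where D: "\<forall>x\<in>X. 0 \<le> \<Delta> x" "v X = v {} + (\<Sum>x\<in>X. \<Delta> x)"
    "\<forall>Y. Y \<subseteq> X \<longrightarrow> v {} + (\<Sum>x\<in>Y. \<Delta> x) \<le> v Y" by auto
  define \<Delta>' where "\<Delta>' = \<Delta>(a := v (insert a X) - v X)"
  have eqX: "\<And>Y. Y \<subseteq> X \<Longrightarrow> (\<Sum>x\<in>Y. \<Delta>' x) = (\<Sum>x\<in>Y. \<Delta> x)"
    using insert.hyps(2) by (intro sum.cong) (auto simp: \<Delta>'_def)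
  have aU: "a \<in> U" and XU': "X \<subseteq> U" using insert.prems by auto
  have "v X \<le> v (insert a X)" by (rule monoD[OF mono _ insert.prems]) auto
  then have Da: "0 \<le> \<Delta>' a" unfolding \<Delta>'_def by auto
  moreover have "v (insert a X) = v {} + (\<Sum>x\<in>insert a X. \<Delta>' x)"
    using insert.hyps D(2) eqX[of X] by (simp add: \<Delta>'_def)
  moreover have "\<forall>x\<in>insert a X. 0 \<le> \<Delta>' x" using D(1) Da insert.hyps(2)
    unfolding \<Delta>'_def by auto
  moreover have "v {} + (\<Sum>x\<in>Y. \<Delta>' x) \<le> v Y" if Y: "Y \<subseteq> insert a X" for Y
  proof (cases "a \<in> Y")
    case False
    then have "Y \<subseteq> X" using Y by auto
    then show ?thesis using D(3) eqX by auto
  next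
    case True
    define Y' where "Y' = Y - {a}"
    have Y': "Y' \<subseteq> X" "Y = insert a Y'" "a \<notin> Y'" using Y True by (auto simp: Y'_def)
    have finY': "finite Y'" using Y'(1) insert.hyps(1) finite_subset by blast
    have "v (insert a X) - v X \<le> v (insert a Y') - v Y'"
      by (rule submodD[OF submod Y'(1) XU' aU insert.hyps(2)])
    moreover have "(\<Sum>x\<in>Y. \<Delta>' x) = \<Delta>' a + (\<Sum>x\<in>Y'. \<Delta> x)"
      using Y' finY' eqX[of Y'] by simp
    moreover have "v {} + (\<Sum>x\<in>Y'. \<Delta> x) \<le> v Y'" using D(3) Y'(1) by blast
    ultimately show ?thesis using Y' by (simp add: \<Delta>'_def)
  qed
  ultimately show ?case by (intro exI[of _ \<Delta>']) blast
qed

lemma cands_nonempty: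
  assumes "finite L" "L - S \<noteq> {}"
  shows "greedy_cands v L S \<noteq> {}"
proof -
  let ?f = "\<lambda>y. v (insert y S) - v S"
  have fin: "finite (?f ` (L - S))" using assms by auto
  have ne: "?f ` (L - S) \<noteq> {}" using assms by auto
  obtain x where x: "x \<in> L - S" "?f x = Max (?f ` (L - S))"
    using Max_in[OF fin ne] by (metis (no_types, lifting) imageE)
  have "\<forall>y\<in>L-S. ?f y \<le> ?f x" using x fin by auto
  then show ?thesis using x unfolding greedy_cands_def by blast
qed

lemma step_props:
  assumes tb: "\<forall>T. T \<subseteq> U \<and> T \<noteq> {} \<longrightarrow> tb T \<in> T"
    and LU: "L \<subseteq> U" and fin: "finite L" and ne: "L - S \<noteq> {}"
  shows "\<exists>x. x \<in> L - S \<and> greedy_step v tb L S = insert x S \<and>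
     (\<forall>y\<in>L - S. v (insert y S) - v S \<le> v (insert x S) - v S)"
proof -
  have "greedy_cands v L S \<subseteq> U" using LU unfolding greedy_cands_def by auto
  then have "tb (greedy_cands v L S) \<in> greedy_cands v L S"
    using tb cands_nonempty[OF fin ne] by blast
  then show ?thesis unfolding greedy_step_def greedy_cands_def by blast
qed

lemma greedy_iter:
  assumes tb: "\<forall>T. T \<subseteq> U \<and> T \<noteq> {} \<longrightarrow> tb T \<in> T"
    and LU: "L \<subseteq> U" and fin: "finite L"
  shows "i \<le> card L \<Longrightarrow> (greedy_step v tb L ^^ i) {} \<subseteq> L \<and> card ((greedy_step v tb L ^^ i) {}) = i"
proof (induction i)
  case 0 then show ?case by simp
next
  case (Suc i)
  let ?S = "(greedy_step v tb L ^^ i) {}"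
  have IH: "?S \<subseteq> L" "card ?S = i" using Suc by auto
  have "L - ?S \<noteq> {}" using IH Suc.prems by auto
  then obtain x where "x \<in> L - ?S" "greedy_step v tb L ?S = insert x ?S"
    using step_props[OF tb LU fin] by blast
  moreover have "finite ?S" using IH fin finite_subset by blast
  ultimately show ?case using IH by simp
qed


lemma exp_bound:
  fixes m k :: nat
  assumes m: "m \<ge> 1" and k: "k \<ge> 1"
  shows "(1 - 1 / real m) ^ k \<le> real m / (exp 1 * real k)"
proof -
  have "1 - 1 / real m \<le> exp (- (1 / real m))"
    using exp_ge_add_one_self[of "- (1 / real m)"] by simp
  moreover have "0 \<le> 1 - 1 / real m" using m by simp
  ultimately have "(1 - 1 / real m) ^ k \<le> exp (- (1 / real m)) ^ k"
    by (rule power_mono)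
  also have "\<dots> = exp (- (real k / real m))"
    by (simp add: exp_of_nat_mult[symmetric])
  also have "\<dots> \<le> real m / (exp 1 * real k)"
  proof -
    define x where "x = real k / real m"
    have xpos: "x > 0" using m k by (simp add: x_def)
    have "1 + (x - 1) \<le> exp (x - 1)" by (rule exp_ge_add_one_self)
    then have "x \<le> exp x / exp 1" by (simp add: exp_diff)
    then have ex: "exp 1 * x \<le> exp x" by (simp add: field_simps)
    have "exp (- x) = 1 / exp x" by (simp add: exp_minus field_simps)
    also have "\<dots> \<le> 1 / (exp 1 * x)"
      using ex xpos by (intro divide_left_mono) auto
    also have "\<dots> = real m / (exp 1 * real k)" using m by (simp add: x_def field_simps)
    finally show ?thesis by (simp add: x_def)
  qed
  finally show ?thesis .
qed

lemma greedy_bound: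
  assumes tb: "\<forall>T. T \<subseteq> U \<and> T \<noteq> {} \<longrightarrow> tb T \<in> T"
    and finU: "finite U" and LU: "L \<subseteq> U"
    and mono: "monotone_setfun U v" and submod: "submodular_setfun U v"
    and nonneg: "nonneg_setfun U v" and k: "k \<ge> 1"
    and TL: "T \<subseteq> L" and cardT: "card T \<le> k"
  shows "(1 - real (card T) / (exp 1 * real k)) * v T \<le> v (greedy v tb k L)"
proof -
  let ?S = "\<lambda>i. (greedy_step v tb L ^^ i) {}"
  define m where "m = card T"
  have finL: "finite L" using finU LU finite_subset by blast
  have finT: "finite T" using finL TL finite_subset by blast
  have TU: "T \<subseteq> U" using TL LU by auto
  have Si: "\<And>i. i \<le> card L \<Longrightarrow> ?S i \<subseteq> L \<and> card (?S i) = i"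
    using greedy_iter[OF tb LU finL] by blast
  have gdef: "greedy v tb k L = ?S (min k (card L))" unfolding greedy_def by simp
  have GL: "greedy v tb k L \<subseteq> L" using Si[of "min k (card L)"] gdef by simp
  have vT0: "0 \<le> v T" using nonnegD[OF nonneg TU] .
  have v00: "0 \<le> v {}" using nonnegD[OF nonneg] by simp
  show ?thesis
  proof (cases "m = 0")
    case True
    then have "T = {}" using finT m_def by simp
    moreover have "v {} \<le> v (greedy v tb k L)" using monoD[OF mono _ ] GL LU by blast
    ultimately show ?thesis by simp
  next
    case False
    then have m1: "m \<ge> 1" by simp
    have key: "v T - v (?S i) \<le> real m * (v (?S (Suc i)) - v (?S i))" if i: "i < card L" for i
    proof -
      define S where "S = ?S i"
      have SL: "S \<subseteq> L" "card S = i" using Si[of i] i by (auto simp: S_def)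
      have finS: "finite S" using SL finL finite_subset by blast
      have "L - S \<noteq> {}" using SL i by auto
      then obtain x where x: "x \<in> L - S" "greedy_step v tb L S = insert x S"
        "\<forall>y\<in>L - S. v (insert y S) - v S \<le> v (insert x S) - v S"
        using step_props[OF tb LU finL] by blast
      have SS: "?S (Suc i) = insert x S" using x(2) by (simp add: S_def)
      define \<delta> where "\<delta> = v (insert x S) - v S"
      have SU: "S \<subseteq> U" using SL LU by auto
      have d0: "0 \<le> \<delta>" using monoD[OF mono, of S "insert x S"] SU x LU by (auto simp: \<delta>_def)
      have "v T \<le> v (S \<union> (T - S))" using monoD[OF mono, of T "S \<union> (T - S)"] SU TU by auto
      also have "\<dots> \<le> v S + (\<Sum>t\<in>T - S. v (insert t S) - v S)"
        using sub_sum[OF submod, of "T - S" S] finT SU TU by auto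
      also have "\<dots> \<le> v S + (\<Sum>t\<in>T - S. \<delta>)"
        using x(3) TL unfolding \<delta>_def by (intro add_left_mono sum_mono) auto
      also have "\<dots> = v S + real (card (T - S)) * \<delta>" by simp
      also have "\<dots> \<le> v S + real m * \<delta>"
        using d0 card_mono[OF finT, of "T - S"] unfolding m_def
        by (intro add_left_mono mult_right_mono) auto
      finally show ?thesis using SS by (simp add: S_def \<delta>_def)
    qed
    define q where "q = 1 - 1 / real m"
    have q0: "0 \<le> q" using m1 by (simp add: q_def)
    have ind: "i \<le> min k (card L) \<Longrightarrow> v T - v (?S i) \<le> q ^ i * (v T - v {})" for i
    proof (induction i)
      case 0 then show ?case by simp
    next
      case (Suc i)
      have i: "i < card L" using Suc.prems by simp
      have IH: "v T - v (?S i) \<le> q ^ i * (v T - v {})" using Suc by simp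
      have K: "v T - v (?S i) \<le> real m * (v (?S (Suc i)) - v (?S i))" using key[OF i] .
      have "real m * (v T - v (?S (Suc i))) \<le> (real m - 1) * (v T - v (?S i))"
        using K by (simp add: algebra_simps)
      then have "v T - v (?S (Suc i)) \<le> q * (v T - v (?S i))"
        using m1 by (simp add: q_def field_simps)
      also have "\<dots> \<le> q * (q ^ i * (v T - v {}))" using IH q0 by (rule mult_left_mono)
      finally show ?case by simp
    qed
    show ?thesis
    proof (cases "card L \<le> k")
      case True
      then have "?S (card L) = L" using Si[of "card L"] finL by (simp add: card_subset_eq)
      then have "greedy v tb k L = L" using gdef True by simp
      then have "v T \<le> v (greedy v tb k L)" using monoD[OF mono TL LU] by simp
      moreover have "0 \<le> real (card T) / (exp 1 * real k) * v T" using vT0 by simp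
      ultimately show ?thesis by (simp add: algebra_simps)
    next
      case False
      then have gk: "greedy v tb k L = ?S k" using gdef by simp
      have "v T - v (?S k) \<le> q ^ k * (v T - v {})" using ind[of k] False by simp
      also have "\<dots> \<le> q ^ k * v T" using v00 q0 by (intro mult_left_mono) auto
      also have "\<dots> \<le> (real m / (exp 1 * real k)) * v T"
        using exp_bound[OF m1 k] vT0 unfolding q_def by (rule mult_right_mono)
      finally show ?thesis using gk by (simp add: m_def algebra_simps)
    qed
  qed
qed


lemma perm_sym:
  assumes pi: "\<pi> permutes U"
  shows "(\<Sum>\<sigma>\<in>permutations_of_set U. f (set (take l \<sigma>)))
       = (\<Sum>\<sigma>\<in>permutations_of_set U. f (\<pi> ` set (take l \<sigma>)))"
proof -
  have injpi: "inj \<pi>" using pi by (rule permutes_inj)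
  have inj: "inj_on (map \<pi>) (permutations_of_set U)"
    using injpi by (auto intro!: inj_onI)
  have "(\<Sum>\<sigma>\<in>permutations_of_set U. f (set (take l \<sigma>)))
      = (\<Sum>\<sigma>\<in>map \<pi> ` permutations_of_set U. f (set (take l \<sigma>)))"
    using permutations_of_set_image_permutes[OF pi] by simp
  also have "\<dots> = (\<Sum>\<sigma>\<in>permutations_of_set U. f (set (take l (map \<pi> \<sigma>))))"
    using sum.reindex[OF inj] by simp
  also have "\<dots> = (\<Sum>\<sigma>\<in>permutations_of_set U. f (\<pi> ` set (take l \<sigma>)))"
    by (simp add: take_map)
  finally show ?thesis .
qed

lemma card_take_perm:
  assumes "\<sigma> \<in> permutations_of_set U" "l \<le> card U"
  shows "card (set (take l \<sigma>)) = l" "set (take l \<sigma>) \<subseteq> U"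
proof -
  have d: "distinct \<sigma>" "set \<sigma> = U" using permutations_of_setD[OF assms(1)] by auto
  have len: "length \<sigma> = card U" using length_finite_permutations_of_set[OF assms(1)] .
  show "card (set (take l \<sigma>)) = l" using d len assms(2) by (simp add: distinct_card)
  show "set (take l \<sigma>) \<subseteq> U" using d set_take_subset by metis
qed

lemma S1_eq:
  assumes finU: "finite U" and a: "a \<in> U" and l: "l \<le> card U"
  shows "real (card U) * (\<Sum>\<sigma>\<in>permutations_of_set U. of_bool (a \<in> set (take l \<sigma>)) :: real)
       = real (card (permutations_of_set U)) * real l"
proof -
  let ?P = "permutations_of_set U"
  define S1 where "S1 = (\<lambda>a. (\<Sum>\<sigma>\<in>?P. of_bool (a \<in> set (take l \<sigma>)) :: real))"
  have sym: "S1 b = S1 a" if b: "b \<in> U" for b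
  proof -
    have "S1 b = (\<Sum>\<sigma>\<in>?P. (\<lambda>X. of_bool (b \<in> X) :: real) (set (take l \<sigma>)))"
      by (simp add: S1_def)
    also have "\<dots> = (\<Sum>\<sigma>\<in>?P. (\<lambda>X. of_bool (b \<in> X) :: real) (Transposition.transpose a b ` set (take l \<sigma>)))"
      by (rule perm_sym[OF permutes_swap_id[OF a b]])
    also have "\<dots> = S1 a" by (simp add: S1_def in_transpose_image_iff)
    finally show ?thesis .
  qed
  have "(\<Sum>b\<in>U. S1 b) = (\<Sum>\<sigma>\<in>?P. \<Sum>b\<in>U. of_bool (b \<in> set (take l \<sigma>)) :: real)"
    unfolding S1_def by (rule sum.swap)
  also have "\<dots> = (\<Sum>\<sigma>\<in>?P. real l)"
  proof (rule sum.cong[OF refl])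
    fix \<sigma> assume s: "\<sigma> \<in> ?P"
    have "U \<inter> {b. b \<in> set (take l \<sigma>)} = set (take l \<sigma>)" using card_take_perm[OF s l] by auto
    then show "(\<Sum>b\<in>U. of_bool (b \<in> set (take l \<sigma>)) :: real) = real l"
      using card_take_perm[OF s l] finU by simp
  qed
  also have "\<dots> = real (card ?P) * real l" by simp
  finally have "(\<Sum>b\<in>U. S1 b) = real (card ?P) * real l" .
  moreover have "(\<Sum>b\<in>U. S1 b) = real (card U) * S1 a" using sym by simp
  ultimately show ?thesis by (simp add: S1_def)
qed

lemma S2_eq:
  assumes finU: "finite U" and a: "a \<in> U" and b: "b \<in> U" and ab: "a \<noteq> b" and l: "l \<le> card U"
  shows "(real (card U) - 1) * (\<Sum>\<sigma>\<in>permutations_of_set U.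
              of_bool (a \<in> set (take l \<sigma>) \<and> b \<in> set (take l \<sigma>)) :: real)
       = (real l - 1) * (\<Sum>\<sigma>\<in>permutations_of_set U. of_bool (a \<in> set (take l \<sigma>)) :: real)"
proof -
  let ?P = "permutations_of_set U"
  define S2 where "S2 = (\<lambda>b. (\<Sum>\<sigma>\<in>?P. of_bool (a \<in> set (take l \<sigma>) \<and> b \<in> set (take l \<sigma>)) :: real))"
  have sym: "S2 c = S2 b" if c: "c \<in> U - {a}" for c
  proof -
    have ta: "Transposition.transpose b c a = a" using c ab by (auto intro: transpose_apply_other)
    have "S2 c = (\<Sum>\<sigma>\<in>?P. (\<lambda>X. of_bool (a \<in> X \<and> c \<in> X) :: real) (set (take l \<sigma>)))"
      by (simp add: S2_def)
    also have "\<dots> = (\<Sum>\<sigma>\<in>?P. (\<lambda>X. of_bool (a \<in> X \<and> c \<in> X) :: real) (Transposition.transpose b c ` set (take l \<sigma>)))"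
      using c b by (intro perm_sym permutes_swap_id) auto
    also have "\<dots> = S2 b" using ta by (simp add: S2_def in_transpose_image_iff)
    finally show ?thesis .
  qed
  have "(\<Sum>c\<in>U - {a}. S2 c) = (\<Sum>\<sigma>\<in>?P. \<Sum>c\<in>U - {a}. of_bool (a \<in> set (take l \<sigma>) \<and> c \<in> set (take l \<sigma>)) :: real)"
    unfolding S2_def by (rule sum.swap)
  also have "\<dots> = (\<Sum>\<sigma>\<in>?P. (real l - 1) * of_bool (a \<in> set (take l \<sigma>)))"
  proof (rule sum.cong[OF refl])
    fix \<sigma> assume s: "\<sigma> \<in> ?P"
    let ?L = "set (take l \<sigma>)"
    show "(\<Sum>c\<in>U - {a}. of_bool (a \<in> ?L \<and> c \<in> ?L) :: real) = (real l - 1) * of_bool (a \<in> ?L)"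
    proof (cases "a \<in> ?L")
      case True
      have e: "(U - {a}) \<inter> {c. c \<in> ?L} = ?L - {a}" using card_take_perm[OF s l] by auto
      have "card (?L - {a}) = l - 1" using True card_take_perm[OF s l] by simp
      moreover have "l \<ge> 1" using True by (cases l) auto
      ultimately show ?thesis using True finU e by simp
    next
      case False then show ?thesis by simp
    qed
  qed
  also have "\<dots> = (real l - 1) * (\<Sum>\<sigma>\<in>?P. of_bool (a \<in> set (take l \<sigma>)) :: real)"
    by (simp add: sum_distrib_left)
  finally have "(\<Sum>c\<in>U - {a}. S2 c) = \<dots>" .
  moreover have "(\<Sum>c\<in>U - {a}. S2 c) = real (card (U - {a})) * S2 b" using sym by simp
  moreover have "real (card (U - {a})) = real (card U) - 1" proof -
    have "0 < card U" using a finU by (auto simp: card_gt_0_iff)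
    then have "real (card U - 1) = real (card U) - 1" by (simp add: of_nat_diff)
    moreover have "card (U - {a}) = card U - 1" using a finU by simp
    ultimately show ?thesis by simp
  qed
  ultimately show ?thesis by (simp add: S2_def)
qed


theorem mainTheorem5:
  fixes U :: "'a set" and v :: "'a set \<Rightarrow> real" and k l :: nat
    and tb :: "'a set \<Rightarrow> 'a" and OPT :: "'a set"
  assumes finU: "finite U"
    and k: "k \<ge> 1"
    and nonneg: "nonneg_setfun U v"
    and mono: "monotone_setfun U v"
    and submod: "submodular_setfun U v"
    and tb: "\<forall>T. T \<subseteq> U \<and> T \<noteq> {} \<longrightarrow> tb T \<in> T"
    and OPT_sub: "OPT \<subseteq> U" and OPT_card: "card OPT \<le> k"
    and OPT_max: "\<forall>S. S \<subseteq> U \<and> card S \<le> k \<longrightarrow> v S \<le> v OPT"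
    and hl: "l \<in> {1..card U}"
  shows "measure_pmf.expectation (pmf_of_set (permutations_of_set U))
           (\<lambda>\<sigma>. v (greedy v tb k (set (take l \<sigma>))))
         \<ge> (1 - real l / (exp 1 * real (card U)) - 1 / (exp 1 * real k))
             * (real l / real (card U)) * v OPT"
proof -
  let ?P = "permutations_of_set U"
  define n where "n = card U"
  define N where "N = real (card ?P)"
  define p where "p = real l / real n"
  define c where "c = p - p * p / exp 1 - p / (exp 1 * real k)"
  define L where "L = (\<lambda>\<sigma>::'a list. set (take l \<sigma>))"
  define F where "F = (\<lambda>\<sigma>. v (greedy v tb k (L \<sigma>)))"
  define M where "M = (\<lambda>\<sigma>. \<Sum>x\<in>OPT. of_bool (x \<in> L \<sigma>) :: real)"
  define g where "g = (\<lambda>\<sigma>. 1 - M \<sigma> / (exp 1 * real k))"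
  have l1: "1 \<le> l" and ln: "l \<le> n" using hl by (auto simp: n_def)
  have npos: "0 < real n" using l1 ln by simp
  have Ppos: "0 < card ?P" using finU by simp
  have Npos: "0 < N" using Ppos by (simp add: N_def)
  have p0: "0 < p" using l1 npos by (simp add: p_def)
  have p1: "p \<le> 1" using ln npos by (simp add: p_def)
  have kpos: "0 < real k" using k by simp
  have e1: "1 \<le> exp (1::real)" by simp
  have finOPT: "finite OPT" using finU OPT_sub finite_subset by blast
  have v00: "0 \<le> v {}" using nonnegD[OF nonneg] by simp
  obtain \<Delta> where D: "\<forall>x\<in>OPT. 0 \<le> \<Delta> x" "v OPT = v {} + (\<Sum>x\<in>OPT. \<Delta> x)"
      "\<forall>Y. Y \<subseteq> OPT \<longrightarrow> v {} + (\<Sum>x\<in>Y. \<Delta> x) \<le> v Y"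
    using weights[OF mono submod finOPT OPT_sub] by blast
  have Lsub: "\<sigma> \<in> ?P \<Longrightarrow> L \<sigma> \<subseteq> U" for \<sigma>
    using card_take_perm[of \<sigma> U l] ln by (simp add: L_def n_def)
  have Mcard: "M \<sigma> = real (card (OPT \<inter> L \<sigma>))" for \<sigma>
  proof -
    have "OPT \<inter> {x. x \<in> L \<sigma>} = OPT \<inter> L \<sigma>" by auto
    then show ?thesis using finOPT by (simp add: M_def)
  qed
  have g0: "0 \<le> g \<sigma>" for \<sigma>
  proof -
    have "real (card (OPT \<inter> L \<sigma>)) \<le> real k"
      using card_mono[OF finOPT, of "OPT \<inter> L \<sigma>"] OPT_card by simp
    also have "\<dots> \<le> exp 1 * real k" using e1 kpos by simp
    finally show ?thesis using kpos by (simp add: g_def Mcard)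
  qed
  have pw: "g \<sigma> * v {} + (\<Sum>x\<in>OPT. \<Delta> x * (g \<sigma> * of_bool (x \<in> L \<sigma>))) \<le> F \<sigma>"
    if s: "\<sigma> \<in> ?P" for \<sigma>
  proof -
    let ?T = "OPT \<inter> L \<sigma>"
    have "(1 - real (card ?T) / (exp 1 * real k)) * v ?T \<le> F \<sigma>"
      unfolding F_def
      by (rule greedy_bound[OF tb finU Lsub[OF s] mono submod nonneg k])
         (auto intro: order_trans[OF card_mono[OF finOPT] OPT_card])
    then have gT: "g \<sigma> * v ?T \<le> F \<sigma>" by (simp add: g_def Mcard)
    have "(\<Sum>x\<in>OPT. \<Delta> x * of_bool (x \<in> L \<sigma>)) = (\<Sum>x\<in>?T. \<Delta> x)"
    proof -
      have "(\<Sum>x\<in>OPT. \<Delta> x * of_bool (x \<in> L \<sigma>)) = (\<Sum>x\<in>OPT. if x \<in> L \<sigma> then \<Delta> x else 0)"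
        by (intro sum.cong) auto
      also have "\<dots> = sum \<Delta> ?T" by (rule sum.inter_restrict[OF finOPT, symmetric])
      finally show ?thesis .
    qed
    moreover have "v {} + (\<Sum>x\<in>?T. \<Delta> x) \<le> v ?T" using D(3) by blast
    ultimately have "g \<sigma> * (v {} + (\<Sum>x\<in>OPT. \<Delta> x * of_bool (x \<in> L \<sigma>))) \<le> g \<sigma> * v ?T"
      using g0 by (simp add: mult_left_mono)
    also have "\<dots> \<le> F \<sigma>" by (rule gT)
    finally show ?thesis
      by (simp add: algebra_simps sum_distrib_left)
  qed
  have S1: "(\<Sum>\<sigma>\<in>?P. of_bool (x \<in> L \<sigma>) :: real) = N * p" if x: "x \<in> U" for x
  proof -
    have "real n * (\<Sum>\<sigma>\<in>?P. of_bool (x \<in> L \<sigma>) :: real) = N * real l"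
      using S1_eq[OF finU x, of l] ln by (simp add: L_def N_def n_def)
    then show ?thesis using npos by (simp add: p_def field_simps)
  qed
  have S2: "(\<Sum>\<sigma>\<in>?P. of_bool (x \<in> L \<sigma> \<and> y \<in> L \<sigma>) :: real) \<le> N * p * p"
    if x: "x \<in> U" and y: "y \<in> U" and ne: "x \<noteq> y" for x y
  proof -
    define X where "X = (\<Sum>\<sigma>\<in>?P. of_bool (x \<in> L \<sigma> \<and> y \<in> L \<sigma>) :: real)"
    have eq: "(real n - 1) * X = (real l - 1) * (N * p)"
      using S2_eq[OF finU x y ne, of l] ln S1[OF x] by (simp add: L_def N_def n_def X_def)
    have n2: "2 \<le> n"
    proof -
      have "{x, y} \<subseteq> U" using x y by auto
      then have "card {x, y} \<le> n" using card_mono[OF finU] by (simp add: n_def)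
      then show ?thesis using ne by simp
    qed
    have "(real l - 1) \<le> (real n - 1) * p"
    proof -
      have "(real l - 1) * real n \<le> (real n - 1) * real l" using ln by (simp add: algebra_simps)
      then show ?thesis using npos by (simp add: p_def field_simps)
    qed
    then have "(real l - 1) * (N * p) \<le> (real n - 1) * p * (N * p)"
      using Npos p0 by (intro mult_right_mono) auto
    then have "(real n - 1) * X \<le> (real n - 1) * (N * p * p)" using eq by (simp add: algebra_simps)
    moreover have "0 < real n - 1" using n2 by simp
    ultimately show ?thesis unfolding X_def by simp
  qed
  have hA: "N * c \<le> (\<Sum>\<sigma>\<in>?P. g \<sigma>)"
  proof -
    have "(\<Sum>\<sigma>\<in>?P. M \<sigma>) = (\<Sum>x\<in>OPT. \<Sum>\<sigma>\<in>?P. of_bool (x \<in> L \<sigma>) :: real)"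
      unfolding M_def by (rule sum.swap)
    also have "\<dots> = (\<Sum>x\<in>OPT. N * p)" using S1 OPT_sub by (intro sum.cong) auto
    also have "\<dots> = real (card OPT) * (N * p)" by simp
    also have "\<dots> \<le> real k * (N * p)" using OPT_card Npos p0 by (intro mult_right_mono) auto
    finally have sM: "(\<Sum>\<sigma>\<in>?P. M \<sigma>) \<le> real k * (N * p)" .
    have "(\<Sum>\<sigma>\<in>?P. g \<sigma>) = N - (\<Sum>\<sigma>\<in>?P. M \<sigma>) / (exp 1 * real k)"
      by (simp add: g_def sum_subtractf sum_divide_distrib N_def)
    also have "\<dots> \<ge> N - real k * (N * p) / (exp 1 * real k)"
      using sM kpos by (intro diff_left_mono divide_right_mono) auto
    finally have "N - N * p / exp 1 \<le> (\<Sum>\<sigma>\<in>?P. g \<sigma>)" using kpos by simp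
    moreover have "c \<le> 1 - p / exp 1"
    proof -
      have "p \<le> exp 1" using p1 e1 by linarith
      then have "0 \<le> 1 - p / exp 1" by (simp add: field_simps)
      then have "0 \<le> (1 - p) * (1 - p / exp 1)" using p1
        by (intro mult_nonneg_nonneg) auto
      moreover have "0 \<le> p / (exp 1 * real k)" using p0 kpos by simp
      moreover have "(1 - p) * (1 - p / exp 1) = 1 - p - p / exp 1 + p * p / exp 1"
        by (simp add: algebra_simps diff_divide_distrib)
      ultimately show ?thesis unfolding c_def by linarith
    qed
    then have "N * c \<le> N * (1 - p / exp 1)" using Npos by (intro mult_left_mono) auto
    ultimately show ?thesis by (simp add: algebra_simps)
  qed
  have hB: "N * c \<le> (\<Sum>\<sigma>\<in>?P. g \<sigma> * of_bool (x \<in> L \<sigma>))" if x: "x \<in> OPT" for x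
  proof -
    have oU: "x \<in> U" using x OPT_sub by auto
    define Q where "Q = (\<lambda>y. (\<Sum>\<sigma>\<in>?P. of_bool (x \<in> L \<sigma> \<and> y \<in> L \<sigma>) :: real))"
    have "(\<Sum>\<sigma>\<in>?P. M \<sigma> * of_bool (x \<in> L \<sigma>)) = (\<Sum>\<sigma>\<in>?P. \<Sum>y\<in>OPT. of_bool (x \<in> L \<sigma> \<and> y \<in> L \<sigma>) :: real)"
      unfolding M_def by (intro sum.cong refl) (auto simp: sum_distrib_right of_bool_conj)
    also have "\<dots> = (\<Sum>y\<in>OPT. Q y)" unfolding Q_def by (rule sum.swap)
    also have "\<dots> = Q x + (\<Sum>y\<in>OPT - {x}. Q y)" using x finOPT by (simp add: sum.remove)
    also have "\<dots> \<le> N * p + (\<Sum>y\<in>OPT - {x}. N * p * p)"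
    proof (intro add_mono sum_mono)
      show "Q x \<le> N * p" using S1[OF oU] by (simp add: Q_def)
      fix y assume "y \<in> OPT - {x}"
      then show "Q y \<le> N * p * p" unfolding Q_def using S2[OF oU] OPT_sub by auto
    qed
    also have "\<dots> = N * p + real (card (OPT - {x})) * (N * p * p)" by simp
    also have "\<dots> \<le> N * p + real k * (N * p * p)"
    proof -
      have "card (OPT - {x}) \<le> k" using OPT_card card_Diff1_le[of OPT x] by linarith
      then show ?thesis using Npos p0 by (intro add_left_mono mult_right_mono) auto
    qed
    finally have sM: "(\<Sum>\<sigma>\<in>?P. M \<sigma> * of_bool (x \<in> L \<sigma>)) \<le> N * p + real k * (N * p * p)" .
    have "(\<Sum>\<sigma>\<in>?P. g \<sigma> * of_bool (x \<in> L \<sigma>))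
        = (\<Sum>\<sigma>\<in>?P. of_bool (x \<in> L \<sigma>) :: real) - (\<Sum>\<sigma>\<in>?P. M \<sigma> * of_bool (x \<in> L \<sigma>)) / (exp 1 * real k)"
      by (simp add: g_def left_diff_distrib sum_subtractf sum_divide_distrib del: sum_mult_of_bool_eq sum_of_bool_eq)
    moreover have "\<dots> \<ge> N * p - (N * p + real k * (N * p * p)) / (exp 1 * real k)"
      using sM kpos S1[OF oU] by (intro diff_mono divide_right_mono) auto
    moreover have "N * p - (N * p + real k * (N * p * p)) / (exp 1 * real k) = N * c"
      using kpos by (simp add: c_def field_simps)
    ultimately show ?thesis by linarith
  qed
  have "(\<Sum>\<sigma>\<in>?P. g \<sigma> * v {} + (\<Sum>x\<in>OPT. \<Delta> x * (g \<sigma> * of_bool (x \<in> L \<sigma>)))) \<le> (\<Sum>\<sigma>\<in>?P. F \<sigma>)"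
    using pw by (rule sum_mono)
  moreover have "(\<Sum>\<sigma>\<in>?P. g \<sigma> * v {} + (\<Sum>x\<in>OPT. \<Delta> x * (g \<sigma> * of_bool (x \<in> L \<sigma>))))
     = (\<Sum>\<sigma>\<in>?P. g \<sigma>) * v {} + (\<Sum>x\<in>OPT. \<Delta> x * (\<Sum>\<sigma>\<in>?P. g \<sigma> * of_bool (x \<in> L \<sigma>)))"
    by (simp add: sum.distrib sum_distrib_left sum_distrib_right sum.swap[of _ ?P OPT]
          del: sum_mult_of_bool_eq sum_of_bool_mult_eq)
  moreover have "N * c * v {} + (\<Sum>x\<in>OPT. \<Delta> x * (N * c))
     \<le> (\<Sum>\<sigma>\<in>?P. g \<sigma>) * v {} + (\<Sum>x\<in>OPT. \<Delta> x * (\<Sum>\<sigma>\<in>?P. g \<sigma> * of_bool (x \<in> L \<sigma>)))"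
    using hA hB D(1) v00
    by (intro add_mono sum_mono mult_right_mono mult_left_mono) auto
  moreover have "N * c * v {} + (\<Sum>x\<in>OPT. \<Delta> x * (N * c)) = N * (c * v OPT)"
    using D(2) by (simp add: algebra_simps sum_distrib_left sum_distrib_right)
  ultimately have tot: "N * (c * v OPT) \<le> (\<Sum>\<sigma>\<in>?P. F \<sigma>)" by linarith
  have "measure_pmf.expectation (pmf_of_set ?P) F = (\<Sum>\<sigma>\<in>?P. F \<sigma>) / N"
    using finU by (subst integral_pmf_of_set) (auto simp: N_def)
  moreover have "c * v OPT \<le> (\<Sum>\<sigma>\<in>?P. F \<sigma>) / N" using tot Npos by (simp add: field_simps)
  moreover have "(1 - real l / (exp 1 * real (card U)) - 1 / (exp 1 * real k))
             * (real l / real (card U)) = c"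
    unfolding c_def p_def n_def using npos kpos by (simp add: field_simps n_def)
  ultimately show ?thesis by (simp add: F_def L_def)
qed

end
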